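(* Let $\mathcal{X}\subseteq\mathbb{R}^d$ be nonempty, closed and convex, let $f:\mathbb{R}^d\to\mathbb{R}$ be differentiable, $L$-smooth and strictly convex, and assume $\mathcal{X}_\star:=\operatorname{arg\,min}_{x\in\mathcal{X}} f(x)$ is nonempty. Let $x_0\in\mathcal{X}$, $x_\star\in\mathcal{X}_\star$, and let $\{x_k\}_{k\ge0}$ be generated by the Local LMO iteration $x_{k+1}\in\operatorname{arg\,min}_{z\in\mathcal{X}\cap\mathcal{B}(x_k,t_k)}\langle\nabla f(x_k),z\rangle$ with radii $t_k=\|\nabla f(x_k)-\nabla f(x_\star)\|/L$. Then for every $K\ge1$, $$\min_{0\le k\le K-1}\|\nabla f(x_k)-\nabla f(x_\star)\|^2\le\frac1K\sum_{k=0}^{K-1}\|\nabla f(x_k)-\nabla f(x_\star)\|^2\le\frac{L^2\|x_0-x_\star\|^2}{K}.$$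
   Context: $\|\cdot\|$ is the Euclidean norm, $\mathcal{B}(x,t):=\{y:\|y-x\|\le t\}$. $f$ is $L$-smooth if $\|\nabla f(x)-\nabla f(y)\|\le L\|x-y\|$ for all $x,y$. *)

theory Defs
  imports "HOL-Analysis.Analysis"
begin

definition strictly_convex_on :: "'a::real_vector set \<Rightarrow> ('a \<Rightarrow> real) \<Rightarrow> bool" where
  "strictly_convex_on S f \<longleftrightarrow> convex S \<and>
     (\<forall>x\<in>S. \<forall>y\<in>S. x \<noteq> y \<longrightarrow> (\<forall>u::real. 0 < u \<and> u < 1 \<longrightarrow>
        f ((1 - u) *\<^sub>R x + u *\<^sub>R y) < (1 - u) * f x + u * f y))"

end

theory Submission imports Defs begin

lemma line_deriv:
  fixes f :: "'a::euclidean_space \<Rightarrow> real"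
  assumes grad: "\<And>y. GDERIV f y :> g y"
  shows "((\<lambda>s. f (x + s *\<^sub>R v)) has_real_derivative (g (x + s *\<^sub>R v) \<bullet> v)) (at s)"
proof -
  have a: "((\<lambda>s. x + s *\<^sub>R v) has_derivative (\<lambda>h. h *\<^sub>R v)) (at s)"
    by (auto intro!: derivative_eq_intros)
  have b: "(f has_derivative (\<lambda>h. h \<bullet> g (x + s *\<^sub>R v))) (at (x + s *\<^sub>R v))"
    using grad[of "x + s *\<^sub>R v"] unfolding gderiv_def .
  have "((f \<circ> (\<lambda>s. x + s *\<^sub>R v)) has_derivative ((\<lambda>h. h \<bullet> g (x + s *\<^sub>R v)) \<circ> (\<lambda>h. h *\<^sub>R v))) (at s)"
    by (rule diff_chain_at[OF a b])
  then have "((\<lambda>s. f (x + s *\<^sub>R v)) has_derivative (\<lambda>h. (h *\<^sub>R v) \<bullet> g (x + s *\<^sub>R v))) (at s)"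
    by (simp add: o_def)
  then show ?thesis
    unfolding has_field_derivative_def
    by (rule has_derivative_eq_rhs) (auto simp: o_def inner_commute fun_eq_iff)
qed

lemma descent:
  fixes f :: "'a::euclidean_space \<Rightarrow> real"
  assumes grad: "\<And>y. GDERIV f y :> g y"
    and Ls: "\<And>y z. norm (g y - g z) \<le> L * norm (y - z)"
  shows "f y \<le> f x + g x \<bullet> (y - x) + L/2 * (norm (y - x))\<^sup>2"
proof -
  define v where "v = y - x"
  define \<psi> where "\<psi> s = f (x + s *\<^sub>R v) - s * (g x \<bullet> v) - L/2 * s^2 * (norm v)^2" for s
  have d: "(\<psi> has_real_derivative (g (x + s *\<^sub>R v) \<bullet> v - g x \<bullet> v - L * s * (norm v)^2)) (at s)" for s
    unfolding \<psi>_def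
    by (rule derivative_eq_intros line_deriv[OF grad] | simp)+
  have nonpos: "g (x + s *\<^sub>R v) \<bullet> v - g x \<bullet> v - L * s * (norm v)^2 \<le> 0" if "0 < s" for s
  proof -
    have "g (x + s *\<^sub>R v) \<bullet> v - g x \<bullet> v = (g (x + s *\<^sub>R v) - g x) \<bullet> v" by (simp add: inner_diff_left)
    also have "\<dots> \<le> norm (g (x + s *\<^sub>R v) - g x) * norm v" by (rule norm_cauchy_schwarz)
    also have "\<dots> \<le> L * norm (s *\<^sub>R v) * norm v"
      using Ls[of "x + s *\<^sub>R v" x] by (simp add: mult_right_mono)
    also have "\<dots> = L * s * (norm v)^2" using that by (simp add: power2_eq_square)
    finally show ?thesis by simp
  qed
  have "\<psi> 1 \<le> \<psi> 0"
  proof (rule DERIV_nonpos_imp_decreasing_open[of 0 1])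
    show "continuous_on {0..1} \<psi>"
      using d by (meson DERIV_isCont continuous_at_imp_continuous_on)
    fix s :: real assume "0 < s" "s < 1"
    then show "\<exists>y. (\<psi> has_real_derivative y) (at s) \<and> y \<le> 0"
      using d[of s] nonpos[of s] by blast
  qed simp
  then show ?thesis unfolding \<psi>_def v_def by simp
qed

lemma strict_imp_convex:
  assumes "strictly_convex_on UNIV f"
  shows "convex_on UNIV f"
proof (rule convex_onI)
  fix t :: real and x y
  assume t: "0 < t" "t < 1"
  show "f ((1 - t) *\<^sub>R x + t *\<^sub>R y) \<le> (1 - t) * f x + t * f y"
  proof (cases "x = y")
    case True
    then show ?thesis by (simp add: algebra_simps flip: scaleR_add_left)
  next
    case False
    then show ?thesis using assms t unfolding strictly_convex_on_def by (auto intro: less_imp_le)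
  qed
qed simp

lemma tangent:
  fixes f :: "'a::euclidean_space \<Rightarrow> real"
  assumes grad: "\<And>y. GDERIV f y :> g y"
    and cvx: "convex_on UNIV f"
  shows "f x + g x \<bullet> (y - x) \<le> f y"
proof -
  define v where "v = y - x"
  define \<phi> where "\<phi> s = f (x + s *\<^sub>R v)" for s :: real
  have c: "convex_on UNIV \<phi>"
  proof (rule convex_onI)
    fix t a b :: real
    assume t: "0 < t" "t < 1"
    have eq: "x + ((1 - t) *\<^sub>R a + t *\<^sub>R b) *\<^sub>R v = (1 - t) *\<^sub>R (x + a *\<^sub>R v) + t *\<^sub>R (x + b *\<^sub>R v)"
      by (simp add: algebra_simps)
    show "\<phi> ((1 - t) *\<^sub>R a + t *\<^sub>R b) \<le> (1 - t) * \<phi> a + t * \<phi> b"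
      unfolding \<phi>_def eq using convex_onD[OF cvx, of t] t by simp
  qed simp
  have d: "(\<phi> has_real_derivative (g x \<bullet> v)) (at 0 within UNIV)"
    unfolding \<phi>_def using line_deriv[OF grad, of x v 0] by simp
  have "\<phi> 1 - \<phi> 0 \<ge> (g x \<bullet> v) * (1 - 0)"
    by (rule convex_on_imp_above_tangent[OF c]) (use d in auto)
  then show ?thesis unfolding \<phi>_def v_def by simp
qed


lemma first_order:
  fixes f :: "'a::euclidean_space \<Rightarrow> real"
  assumes grad: "\<And>y. GDERIV f y :> g y"
    and Ls: "\<And>y z. norm (g y - g z) \<le> L * norm (y - z)"
    and Lpos: "L > 0"
    and X: "convex X" and xs: "xs \<in> X" and mn: "\<And>y. y \<in> X \<Longrightarrow> f xs \<le> f y"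
    and z: "z \<in> X"
  shows "g xs \<bullet> (z - xs) \<ge> 0"
proof (rule ccontr)
  assume "\<not> ?thesis"
  then have c: "g xs \<bullet> (z - xs) < 0" by simp
  define v where "v = z - xs"
  define c where "c = g xs \<bullet> v"
  define N where "N = L * (norm v)^2"
  have N0: "N \<ge> 0" unfolding N_def using Lpos by simp
  define lam where "lam = min 1 (- c / (N + 1))"
  have c0: "c < 0" using c unfolding c_def v_def .
  have l0: "lam > 0" unfolding lam_def using c0 N0 by (simp add: field_simps)
  have l1: "lam \<le> 1" unfolding lam_def by simp
  have lN: "lam * N < - c"
  proof -
    have "lam * N \<le> (- c / (N + 1)) * N" unfolding lam_def using N0 by (intro mult_right_mono) auto
    also have "\<dots> < - c" using N0 c0 by (simp add: field_simps)
    finally show ?thesis .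
  qed
  have "xs + lam *\<^sub>R v = (1 - lam) *\<^sub>R xs + lam *\<^sub>R z" unfolding v_def by (simp add: algebra_simps)
  also have "\<dots> \<in> X" using X xs z l0 l1 by (simp add: convexD)
  finally have inX: "xs + lam *\<^sub>R v \<in> X" .
  have "f xs \<le> f (xs + lam *\<^sub>R v)" using mn[OF inX] .
  also have "\<dots> \<le> f xs + g xs \<bullet> (lam *\<^sub>R v) + L/2 * (norm (lam *\<^sub>R v))\<^sup>2"
    using descent[OF grad Ls, of "xs + lam *\<^sub>R v" xs] by simp
  also have "\<dots> = f xs + lam * (c + lam * N / 2)"
    unfolding c_def N_def using l0 by (simp add: power2_eq_square algebra_simps)
  finally have "0 \<le> lam * (c + lam * N / 2)" by simp
  then have "0 \<le> c + lam * N / 2" using l0 by (simp add: zero_le_mult_iff)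
  then show False using lN c0 by simp
qed

lemma half_coco:
  fixes f :: "'a::euclidean_space \<Rightarrow> real"
  assumes grad: "\<And>y. GDERIV f y :> g y"
    and Ls: "\<And>y z. norm (g y - g z) \<le> L * norm (y - z)"
    and Lpos: "L > 0"
    and cvx: "convex_on UNIV f"
  shows "f z + g z \<bullet> (x - z) + (norm (g x - g z))\<^sup>2 / (2 * L) \<le> f x"
proof -
  define \<phi> where "\<phi> y = f y - g z \<bullet> y" for y
  define h where "h = g x - g z"
  have gr: "GDERIV \<phi> y :> (g y - g z)" for y
  proof -
    have "GDERIV (\<lambda>y. g z \<bullet> y) y :> g z"
      unfolding gderiv_def by (rule derivative_eq_intros | simp add: inner_commute)+
    then show ?thesis unfolding \<phi>_def by (rule GDERIV_diff[OF grad])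
  qed
  have Ls': "norm ((g y - g z) - (g w - g z)) \<le> L * norm (y - w)" for y w
    using Ls[of y w] by simp
  define y' where "y' = x - (1 / L) *\<^sub>R h"
  have "\<phi> y' \<le> \<phi> x + (g x - g z) \<bullet> (y' - x) + L/2 * (norm (y' - x))\<^sup>2"
    by (rule descent[OF gr Ls'])
  also have "\<dots> = \<phi> x - (norm h)^2 / (2 * L)"
  proof -
    have yx: "y' - x = - ((1 / L) *\<^sub>R h)" unfolding y'_def by simp
    have a: "(g x - g z) \<bullet> (y' - x) = -((norm h)^2 / L)"
      unfolding yx h_def by (simp add: power2_norm_eq_inner)
    have b: "(norm (y' - x))^2 = (norm h)^2 / L^2"
      unfolding yx using Lpos by (simp add: power_divide)
    show ?thesis unfolding a b using Lpos by (simp add: power2_eq_square field_simps)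
  qed
  finally have 1: "\<phi> y' \<le> \<phi> x - (norm h)^2 / (2 * L)" .
  have "f z + g z \<bullet> (y' - z) \<le> f y'" by (rule tangent[OF grad cvx])
  then have "\<phi> z \<le> \<phi> y'" unfolding \<phi>_def by (simp add: inner_diff_right)
  with 1 show ?thesis unfolding \<phi>_def h_def by (simp add: inner_diff_right)
qed

lemma coco:
  fixes f :: "'a::euclidean_space \<Rightarrow> real"
  assumes grad: "\<And>y. GDERIV f y :> g y"
    and Ls: "\<And>y z. norm (g y - g z) \<le> L * norm (y - z)"
    and Lpos: "L > 0"
    and cvx: "convex_on UNIV f"
  shows "(norm (g x - g z))\<^sup>2 \<le> L * ((g x - g z) \<bullet> (x - z))"
proof -
  have 1: "f z + g z \<bullet> (x - z) + (norm (g x - g z))\<^sup>2 / (2 * L) \<le> f x"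
    by (rule half_coco[OF grad Ls Lpos cvx])
  have 2: "f x + g x \<bullet> (z - x) + (norm (g z - g x))\<^sup>2 / (2 * L) \<le> f z"
    by (rule half_coco[OF grad Ls Lpos cvx])
  have n: "norm (g z - g x) = norm (g x - g z)" by (rule norm_minus_commute)
  have "(norm (g x - g z))\<^sup>2 / L \<le> (g x - g z) \<bullet> (x - z)"
    using 1 2 unfolding n by (simp add: inner_diff_left inner_diff_right field_simps)
  then show ?thesis using Lpos by (simp add: field_simps)
qed


lemma nsq:
  fixes a b :: "'a::real_inner"
  shows "(norm (a + b))^2 = (norm a)^2 + 2 * (a \<bullet> b) + (norm b)^2"
  unfolding power2_norm_eq_inner by (simp add: inner_add_left inner_add_right inner_commute)

lemma quad_small:
  fixes a b c T :: real
  assumes "a \<le> T" "c \<ge> 0" "a < T \<or> b < 0"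
  shows "\<exists>lam>0. lam \<le> 1 \<and> a + 2 * b * lam + c * lam^2 \<le> T"
proof (cases "b < 0")
  case True
  define lam where "lam = min 1 (- b / (c + 1))"
  have l0: "lam > 0" unfolding lam_def using True assms by (simp add: field_simps)
  have l1: "lam \<le> 1" unfolding lam_def by simp
  have "c * lam \<le> c * (- b / (c + 1))" unfolding lam_def using assms by (intro mult_left_mono) auto
  also have "\<dots> \<le> - b" using assms True by (simp add: field_simps)
  finally have "c * lam \<le> - b" .
  then have "c * lam * lam \<le> - b * lam" using l0 by (intro mult_right_mono) auto
  then have "c * lam^2 \<le> - b * lam" by (simp add: power2_eq_square mult.assoc)
  then have "a + 2 * b * lam + c * lam^2 \<le> a + b * lam" by simp
  also have "\<dots> \<le> T" using True l0 assms mult_neg_pos[of b lam] by linarith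
  finally show ?thesis using l0 l1 by blast
next
  case False
  then have b0: "b \<ge> 0" "a < T" using assms by auto
  define lam where "lam = min 1 ((T - a) / (2 * b + c + 1))"
  have l0: "lam > 0" unfolding lam_def using b0 assms by (simp add: field_simps)
  have l1: "lam \<le> 1" unfolding lam_def by simp
  have "c * lam^2 \<le> c * lam" using l0 l1 assms by (simp add: power2_eq_square mult_left_mono)
  then have "2 * b * lam + c * lam^2 \<le> (2 * b + c) * lam" by (simp add: algebra_simps)
  also have "\<dots> \<le> (2 * b + c) * ((T - a) / (2 * b + c + 1))"
    unfolding lam_def using b0 assms by (intro mult_left_mono) auto
  also have "\<dots> \<le> T - a" using b0 assms by (simp add: field_simps)
  finally show ?thesis using l0 l1 by force
qed

lemma step_ineq:
  fixes X :: "'a::euclidean_space set" and g :: "'a \<Rightarrow> 'a"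
  assumes X: "convex X" and xk: "xk \<in> X" and y: "y \<in> X" and xs: "xs \<in> X"
    and Lpos: "L > 0"
    and t: "t = norm (g xk - g xs) / L"
    and yb: "norm (y - xk) \<le> t"
    and ymin: "\<And>z. z \<in> X \<inter> cball xk t \<Longrightarrow> g xk \<bullet> y \<le> g xk \<bullet> z"
    and fo: "\<And>z. z \<in> X \<Longrightarrow> g xs \<bullet> (z - xs) \<ge> 0"
    and co: "(norm (g xk - g xs))\<^sup>2 \<le> L * ((g xk - g xs) \<bullet> (xk - xs))"
  shows "(norm (y - xs))\<^sup>2 \<le> (norm (xk - xs))\<^sup>2 - t^2"
proof -
  define d where "d = y - xk"
  define e where "e = xk - xs"
  define h where "h = g xk - g xs"
  have ye: "y - xs = d + e" unfolding d_def e_def by simp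
  have nh: "norm h = L * t" unfolding t h_def using Lpos by simp
  have t0: "t \<ge> 0" unfolding t using Lpos by simp
  have nd: "norm d \<le> t" using yb unfolding d_def .
  have ex: "(norm (d + e))\<^sup>2 = (norm d)^2 + 2 * (d \<bullet> e) + (norm e)^2"
    by (simp add: power2_norm_eq_inner inner_add_left inner_add_right inner_commute)
  show ?thesis
  proof (cases "norm d = t \<and> d \<bullet> (xs - y) \<ge> 0")
    case True
    have "xs - y = - e - d" unfolding d_def e_def by simp
    then have "d \<bullet> (xs - y) = - (d \<bullet> e) - (norm d)^2"
      by (simp add: inner_diff_right power2_norm_eq_inner)
    then have "d \<bullet> (xs - y) = - (d \<bullet> e) - t^2" using True by simp
    with True have "d \<bullet> e \<le> -(t^2)" by linarith
    then show ?thesis unfolding ye ex e_def[symmetric] using True by simp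
  next
    case False
    have "\<exists>lam>0. lam \<le> 1 \<and> (norm d)^2 + 2 * (d \<bullet> (xs - y)) * lam + (norm (xs - y))^2 * lam^2 \<le> t^2"
    proof (rule quad_small)
      show "(norm d)\<^sup>2 \<le> t\<^sup>2" using nd norm_ge_zero power_mono by blast
      show "(norm d)\<^sup>2 < t\<^sup>2 \<or> d \<bullet> (xs - y) < 0"
        using False nd t0 by (metis le_less not_le power_mono norm_ge_zero antisym power2_eq_iff_nonneg) 
    qed simp
    then obtain lam where l: "lam > 0" "lam \<le> 1"
      and q: "(norm d)^2 + 2 * (d \<bullet> (xs - y)) * lam + (norm (xs - y))^2 * lam^2 \<le> t^2" by blast
    define z where "z = y + lam *\<^sub>R (xs - y)"
    have "z = (1 - lam) *\<^sub>R y + lam *\<^sub>R xs" unfolding z_def by (simp add: algebra_simps)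
    then have zX: "z \<in> X" using X y xs l by (simp add: convexD)
    have "(norm (z - xk))^2 = (norm d)^2 + 2 * (d \<bullet> (xs - y)) * lam + (norm (xs - y))^2 * lam^2"
    proof -
      have zk: "z - xk = d + lam *\<^sub>R (xs - y)" unfolding z_def d_def by simp
      show ?thesis unfolding zk nsq
        by (simp add: power_mult_distrib ac_simps)
    qed
    with q have "(norm (z - xk))^2 \<le> t^2" by simp
    then have "norm (z - xk) \<le> t" using t0 by (simp add: power2_le_iff_abs_le)
    then have "z \<in> cball xk t" by (simp add: dist_norm norm_minus_commute)
    with zX have "g xk \<bullet> y \<le> g xk \<bullet> z" using ymin by blast
    then have "0 \<le> lam * (g xk \<bullet> (xs - y))" unfolding z_def by (simp add: inner_add_right inner_diff_right)
    then have A: "0 \<le> g xk \<bullet> (xs - y)" using l by (simp add: zero_le_mult_iff)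
    have B: "0 \<le> g xs \<bullet> (y - xs)" using fo[OF y] .
    have hde: "h \<bullet> (d + e) \<le> 0"
      using A B unfolding h_def ye[symmetric] by (simp add: inner_diff_left inner_diff_right)
    have co': "L * t^2 \<le> h \<bullet> e"
      using co unfolding h_def[symmetric] e_def[symmetric] nh using Lpos
      by (simp add: power2_eq_square ac_simps)
    have "(norm (d + (1 / L) *\<^sub>R h))^2 = (norm d)^2 + 2 * (d \<bullet> h) / L + (norm h)^2 / L^2"
      unfolding nsq using Lpos by (simp add: power_mult_distrib power_divide)
    also have "\<dots> \<le> t^2 + 2 * (d \<bullet> h) / L + t^2"
      using nd nh Lpos t0 by (simp add: power_mono power_mult_distrib)
    also have "\<dots> \<le> 0"
    proof -
      have "h \<bullet> (d + e) = h \<bullet> d + h \<bullet> e" by (rule inner_add_right)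
      moreover have "d \<bullet> h = h \<bullet> d" by (rule inner_commute)
      ultimately have "d \<bullet> h \<le> -(L * t^2)" using hde co' by linarith
      then have "(d \<bullet> h) / L \<le> -(t^2)" using Lpos by (simp add: pos_divide_le_eq mult.commute)
      then show ?thesis by linarith
    qed
    finally have "(norm (d + (1 / L) *\<^sub>R h))^2 \<le> 0" .
    then have "d + (1 / L) *\<^sub>R h = 0" by simp
    then have "d = - ((1 / L) *\<^sub>R h)" by (simp add: eq_neg_iff_add_eq_0)
    then have "d + e = e + (- (1 / L)) *\<^sub>R h" by simp
    then have "(norm (d + e))^2 = (norm e)^2 + 2 * (e \<bullet> ((- (1 / L)) *\<^sub>R h)) + (norm ((- (1 / L)) *\<^sub>R h))^2"
      by (simp only: nsq)
    also have "\<dots> = (norm h)^2 / L^2 - 2 * (h \<bullet> e) / L + (norm e)^2"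
      using Lpos by (simp add: power_mult_distrib power_divide inner_commute)
    also have "\<dots> \<le> (norm e)^2 - t^2"
      using co' nh Lpos by (simp add: power_mult_distrib field_simps)
    finally show ?thesis unfolding ye e_def .
  qed
qed

theorem theorem2:
  fixes X :: "'a::euclidean_space set"
    and f :: "'a \<Rightarrow> real"
    and g :: "'a \<Rightarrow> 'a"
    and L :: real
    and x :: "nat \<Rightarrow> 'a"
    and xs :: 'a
    and K :: nat
  assumes X_nonempty: "X \<noteq> {}"
    and X_closed: "closed X"
    and X_convex: "convex X"
    and grad: "\<And>y. GDERIV f y :> g y"
    and L_pos: "L > 0"
    and L_smooth: "\<And>y z. norm (g y - g z) \<le> L * norm (y - z)"
    and strict_cvx: "strictly_convex_on UNIV f"
    and xs_in: "xs \<in> X"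
    and xs_min: "\<And>y. y \<in> X \<Longrightarrow> f xs \<le> f y"
    and x0: "x 0 \<in> X"
    and step_feas: "\<And>k. x (Suc k) \<in> X \<inter> cball (x k) (norm (g (x k) - g xs) / L)"
    and step_min: "\<And>k z. z \<in> X \<inter> cball (x k) (norm (g (x k) - g xs) / L) \<Longrightarrow>
                     g (x k) \<bullet> x (Suc k) \<le> g (x k) \<bullet> z"
    and K: "K \<ge> 1"
  shows "Min ((\<lambda>k. (norm (g (x k) - g xs))\<^sup>2) ` {..<K})
           \<le> (1 / real K) * (\<Sum>k<K. (norm (g (x k) - g xs))\<^sup>2)
       \<and> (1 / real K) * (\<Sum>k<K. (norm (g (x k) - g xs))\<^sup>2)
           \<le> L\<^sup>2 * (norm (x 0 - xs))\<^sup>2 / real K"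
  proof -
  have cvx: "convex_on UNIV f" by (rule strict_imp_convex[OF strict_cvx])
  define r where "r k = norm (g (x k) - g xs)" for k
  have xX: "x k \<in> X" for k
    by (induction k) (use x0 step_feas in auto)
  have fo: "\<And>z. z \<in> X \<Longrightarrow> g xs \<bullet> (z - xs) \<ge> 0"
    by (rule first_order[OF grad L_smooth L_pos X_convex xs_in xs_min])
  have step: "(norm (x (Suc k) - xs))\<^sup>2 \<le> (norm (x k - xs))\<^sup>2 - (r k / L)^2" for k
  proof -
    have yb: "norm (x (Suc k) - x k) \<le> norm (g (x k) - g xs) / L"
      using step_feas[of k] by (simp add: dist_norm norm_minus_commute)
    show ?thesis unfolding r_def
    proof (rule step_ineq[OF X_convex xX[of k] _ xs_in L_pos refl yb])
      show "x (Suc k) \<in> X" using step_feas[of k] by simp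
      show "\<And>z. z \<in> X \<inter> cball (x k) (norm (g (x k) - g xs) / L) \<Longrightarrow> g (x k) \<bullet> x (Suc k) \<le> g (x k) \<bullet> z"
        by (rule step_min)
      show "\<And>z. z \<in> X \<Longrightarrow> 0 \<le> g xs \<bullet> (z - xs)" by (rule fo)
      show "(norm (g (x k) - g xs))\<^sup>2 \<le> L * ((g (x k) - g xs) \<bullet> (x k - xs))"
        by (rule coco[OF grad L_smooth L_pos cvx])
    qed
  qed
  have tele: "(\<Sum>k<n. (r k / L)^2) \<le> (norm (x 0 - xs))\<^sup>2 - (norm (x n - xs))\<^sup>2" for n
  proof (induction n)
    case 0 then show ?case by simp
  next
    case (Suc n) then show ?case using step[of n] by simp
  qed
  have sumL: "(\<Sum>k<K. (r k)^2) \<le> L^2 * (norm (x 0 - xs))\<^sup>2"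
  proof -
    have "(\<Sum>k<K. (r k)^2) = L^2 * (\<Sum>k<K. (r k / L)^2)"
      using L_pos by (simp add: sum_distrib_left power_divide)
    also have "\<dots> \<le> L^2 * (norm (x 0 - xs))\<^sup>2"
      using tele[of K] by (intro mult_left_mono) (auto intro: order_trans)
    finally show ?thesis .
  qed
  have Kpos: "real K > 0" using K by simp
  have mn: "Min ((\<lambda>k. (r k)^2) ` {..<K}) \<le> (r k)^2" if "k < K" for k
    by (rule Min_le) (use that in auto)
  have "real (card {..<K}) * Min ((\<lambda>k. (r k)^2) ` {..<K}) \<le> (\<Sum>k<K. (r k)^2)"
    by (rule sum_bounded_below) (simp add: mn)
  then have A: "Min ((\<lambda>k. (r k)^2) ` {..<K}) \<le> (1 / real K) * (\<Sum>k<K. (r k)^2)"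
    using Kpos by (simp add: pos_le_divide_eq mult.commute)
  have B: "(1 / real K) * (\<Sum>k<K. (r k)^2) \<le> L^2 * (norm (x 0 - xs))\<^sup>2 / real K"
    using sumL Kpos by (simp add: divide_right_mono)
  show ?thesis using A B unfolding r_def by blast
qed

end
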